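(* Let $\Delta:A\to A$ be a weak-2-local derivation on a unital C$^*$-algebra $A$. Then for each projection $p\in A$, each $a\in A$ and each $\lambda\in\mathbb{C}$, $\Delta(a+\lambda p)=\Delta(a-\lambda(1-p))$.
   Context: A derivation on $A$ is a linear map $D:A\to A$ with $D(ab)=D(a)b+aD(b)$. A (not necessarily linear) map $\Delta:A\to A$ is a weak-2-local derivation if for every $a,b\in A$ and every $\phi\in A^*$ there exists a derivation $D_{a,b,\phi}:A\to A$ such that $\phi\Delta(a)=\phi D_{a,b,\phi}(a)$ and $\phi\Delta(b)=\phi D_{a,b,\phi}(b)$. *)

theory Defs
  imports "HOL-Analysis.Analysis"
begin

text \<open>The complex scalar multiplication is a class parameter; it is required to
  extend the real scalar multiplication of the underlying real Banach algebra.\<close>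

class complex_banach_algebra_1 = real_normed_algebra_1 + banach +
  fixes scaleC :: "complex \<Rightarrow> 'a \<Rightarrow> 'a" (infixr \<open>*\<^sub>C\<close> 75)
  assumes scaleC_add_right: "c *\<^sub>C (x + y) = c *\<^sub>C x + c *\<^sub>C y"
    and scaleC_add_left: "(c + d) *\<^sub>C x = c *\<^sub>C x + d *\<^sub>C x"
    and scaleC_scaleC: "c *\<^sub>C (d *\<^sub>C x) = (c * d) *\<^sub>C x"
    and scaleC_one: "1 *\<^sub>C x = x"
    and scaleR_scaleC: "r *\<^sub>R x = complex_of_real r *\<^sub>C x"
    and norm_scaleC: "norm (c *\<^sub>C x) = cmod c * norm x"
    and mult_scaleC_left: "(c *\<^sub>C x) * y = c *\<^sub>C (x * y)"
    and mult_scaleC_right: "x * (c *\<^sub>C y) = c *\<^sub>C (x * y)"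

class unital_cstar_algebra = complex_banach_algebra_1 +
  fixes cstar :: "'a \<Rightarrow> 'a"
  assumes cstar_cstar: "cstar (cstar x) = x"
    and cstar_add: "cstar (x + y) = cstar x + cstar y"
    and cstar_scaleC: "cstar (c *\<^sub>C x) = cnj c *\<^sub>C cstar x"
    and cstar_mult: "cstar (x * y) = cstar y * cstar x"
    and cstar_identity: "norm (cstar x * x) = (norm x)\<^sup>2"

definition is_projection :: "'a::unital_cstar_algebra \<Rightarrow> bool" where
  "is_projection p \<longleftrightarrow> p * p = p \<and> cstar p = p"

definition clinear_map :: "('a::complex_banach_algebra_1 \<Rightarrow> 'b::complex_banach_algebra_1) \<Rightarrow> bool" where
  "clinear_map f \<longleftrightarrow> (\<forall>x y. f (x + y) = f x + f y) \<and> (\<forall>c x. f (c *\<^sub>C x) = c *\<^sub>C f x)"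

definition derivation :: "('a::complex_banach_algebra_1 \<Rightarrow> 'a) \<Rightarrow> bool" where
  "derivation D \<longleftrightarrow> clinear_map D \<and> (\<forall>a b. D (a * b) = D a * b + a * D b)"

definition cdual :: "('a::complex_banach_algebra_1 \<Rightarrow> complex) set" where
  "cdual = {\<phi>. (\<forall>x y. \<phi> (x + y) = \<phi> x + \<phi> y) \<and> (\<forall>c x. \<phi> (c *\<^sub>C x) = c * \<phi> x)
              \<and> (\<exists>K. \<forall>x. cmod (\<phi> x) \<le> K * norm x)}"

definition weak_2_local_derivation :: "('a::complex_banach_algebra_1 \<Rightarrow> 'a) \<Rightarrow> bool" where
  "weak_2_local_derivation \<Delta> \<longleftrightarrow>
     (\<forall>a b. \<forall>\<phi>\<in>cdual. \<exists>D. derivation D \<and> \<phi> (\<Delta> a) = \<phi> (D a) \<and> \<phi> (\<Delta> b) = \<phi> (D b))"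

end

theory Submission
  imports Defs
begin

definition good :: "'a::real_normed_vector \<Rightarrow> ('a \<times> real) set \<Rightarrow> bool" where
 "good z G \<longleftrightarrow> (z, norm z) \<in> G \<and> (\<forall>x a b. (x,a)\<in>G \<longrightarrow> (x,b)\<in>G \<longrightarrow> a=b)
   \<and> (\<forall>x a y b. (x,a)\<in>G \<longrightarrow> (y,b)\<in>G \<longrightarrow> (x+y,a+b)\<in>G)
   \<and> (\<forall>x a r. (x,a)\<in>G \<longrightarrow> (r *\<^sub>R x, r*a)\<in>G) \<and> (\<forall>x a. (x,a)\<in>G \<longrightarrow> a \<le> norm x)"

lemma good_G0:
  assumes "z \<noteq> 0"
  shows "good z {(t *\<^sub>R z, t * norm z) | t. True}"
  unfolding good_def
proof (intro conjI allI impI)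
  show "(z, norm z) \<in> {(t *\<^sub>R z, t * norm z) |t. True}"
    by (rule CollectI, rule exI[of _ 1]) simp
next
  fix x a b assume "(x,a) \<in> {(t *\<^sub>R z, t * norm z) |t. True}" "(x,b) \<in> {(t *\<^sub>R z, t * norm z) |t. True}"
  then obtain t s where "x = t *\<^sub>R z" "a = t * norm z" "x = s *\<^sub>R z" "b = s * norm z" by blast
  then show "a = b" using assms by (metis scaleR_cancel_right)
next
  fix x a y b assume "(x,a) \<in> {(t *\<^sub>R z, t * norm z) |t. True}" "(y,b) \<in> {(t *\<^sub>R z, t * norm z) |t. True}"
  then obtain t s where "x = t *\<^sub>R z" "a = t * norm z" "y = s *\<^sub>R z" "b = s * norm z" by blast
  then show "(x+y,a+b) \<in> {(t *\<^sub>R z, t * norm z) |t. True}"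
    by (intro CollectI exI[of _ "t+s"]) (simp add: scaleR_add_left distrib_right)
next
  fix x a r assume "(x,a) \<in> {(t *\<^sub>R z, t * norm z) |t. True}"
  then obtain t where "x = t *\<^sub>R z" "a = t * norm z" by blast
  then show "(r *\<^sub>R x, r*a) \<in> {(t *\<^sub>R z, t * norm z) |t. True}"
    by (intro CollectI exI[of _ "r*t"]) simp
next
  fix x a assume "(x,a) \<in> {(t *\<^sub>R z, t * norm z) |t. True}"
  then obtain t where "x = t *\<^sub>R z" "a = t * norm z" by blast
  then show "a \<le> norm x" by (simp add: mult_right_mono)
qed

lemma good_chain:
  assumes "C \<noteq> {}" "subset.chain {G. good z G} C"
  shows "good z (\<Union>C)"
proof -
  have ch: "\<And>X Y. X\<in>C \<Longrightarrow> Y\<in>C \<Longrightarrow> X \<subseteq> Y \<or> Y \<subseteq> X" and gd: "\<And>X. X \<in> C \<Longrightarrow> good z X"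
    using assms(2) unfolding subset_chain_def by auto
  have two: "\<exists>X\<in>C. p \<in> X \<and> q \<in> X" if pq: "p \<in> \<Union>C" "q \<in> \<Union>C" for p q
  proof -
    obtain X Y where "X\<in>C" "Y\<in>C" "p\<in>X" "q\<in>Y" using pq by blast
    then show ?thesis using ch[of X Y] by blast
  qed
  show ?thesis unfolding good_def
  proof (intro conjI allI impI)
    obtain X where "X \<in> C" using assms(1) by blast
    then show "(z, norm z) \<in> \<Union>C" using gd[of X] unfolding good_def by blast
  next
    fix x a b assume "(x,a) \<in> \<Union>C" "(x,b) \<in> \<Union>C"
    then obtain X where "X\<in>C" "(x,a)\<in>X" "(x,b)\<in>X" using two by blast
    then show "a = b" using gd[of X] unfolding good_def by blast
  next
    fix x a y b assume "(x,a) \<in> \<Union>C" "(y,b) \<in> \<Union>C"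
    then obtain X where "X\<in>C" "(x,a)\<in>X" "(y,b)\<in>X" using two by blast
    then show "(x+y,a+b) \<in> \<Union>C" using gd[of X] unfolding good_def by blast
  next
    fix x a r assume "(x,a) \<in> \<Union>C"
    then obtain X where "X\<in>C" "(x,a)\<in>X" by blast
    then show "(r *\<^sub>R x, r*a) \<in> \<Union>C" using gd[of X] unfolding good_def by blast
  next
    fix x a assume "(x,a) \<in> \<Union>C"
    then obtain X where "X\<in>C" "(x,a)\<in>X" by blast
    then show "a \<le> norm x" using gd[of X] unfolding good_def by blast
  qed
qed

lemma good_extend:
  assumes g: "good z M" and x0: "\<forall>a. (x0, a) \<notin> M"
  shows "\<exists>M'. good z M' \<and> M \<subseteq> M' \<and> M' \<noteq> M"
proof -
  have fnc: "\<And>x a b. (x,a)\<in>M \<Longrightarrow> (x,b)\<in>M \<Longrightarrow> a=b"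
   and add: "\<And>x a y b. (x,a)\<in>M \<Longrightarrow> (y,b)\<in>M \<Longrightarrow> (x+y,a+b)\<in>M"
   and sc: "\<And>x a r. (x,a)\<in>M \<Longrightarrow> (r *\<^sub>R x, r*a)\<in>M"
   and dom: "\<And>x a. (x,a)\<in>M \<Longrightarrow> a \<le> norm x"
   and zM: "(z, norm z) \<in> M"
    using g unfolding good_def by blast+
  have zero: "(0,0) \<in> M" using sc[OF zM, of 0] by simp
  define L where "L = {a - norm (s - x0) | s a. (s,a) \<in> M}"
  define c where "c = Sup L"
  have key: "a - norm (s - x0) \<le> norm (s' + x0) - a'" if "(s,a)\<in>M" "(s',a')\<in>M" for s a s' a'
  proof -
    have "a + a' \<le> norm (s + s')" using dom[OF add[OF that]] .
    also have "\<dots> = norm ((s - x0) + (s' + x0))" by (simp add: algebra_simps)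
    also have "\<dots> \<le> norm (s - x0) + norm (s' + x0)" by (rule norm_triangle_ineq)
    finally show ?thesis by simp
  qed
  have Lne: "L \<noteq> {}" unfolding L_def using zero by blast
  have Lbdd: "bdd_above L" unfolding L_def bdd_above_def using key[OF _ zero] by blast
  have c_low: "a - norm (s - x0) \<le> c" if "(s,a)\<in>M" for s a
    unfolding c_def by (rule cSup_upper[OF _ Lbdd]) (use that L_def in blast)
  have c_up: "c \<le> norm (s' + x0) - a'" if "(s',a')\<in>M" for s' a'
    unfolding c_def by (rule cSup_least[OF Lne]) (use key[OF _ that] L_def in blast)
  define M' where "M' = {(s + t *\<^sub>R x0, a + t * c) | s a t. (s,a)\<in>M}"
  have inj: "s = s' \<and> t = t'" if "(s,a)\<in>M" "(s',a')\<in>M" "s + t *\<^sub>R x0 = s' + t' *\<^sub>R x0" for s a s' a' t t'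
  proof (cases "t = t'")
    case True then show ?thesis using that by simp
  next
    case False
    have "(t - t') *\<^sub>R x0 = s' - s" using that(3) by (simp add: algebra_simps)
    then have "(1/(t-t')) *\<^sub>R ((t - t') *\<^sub>R x0) = (1/(t-t')) *\<^sub>R (s' + (-1) *\<^sub>R s)" by simp
    then have "x0 = (1/(t-t')) *\<^sub>R (s' + (-1) *\<^sub>R s)" using False by simp
    moreover have "((1/(t-t')) *\<^sub>R (s' + (-1) *\<^sub>R s), (1/(t-t')) * (a' + (-1)*a)) \<in> M"
      by (intro sc add that sc)
    ultimately show ?thesis using x0 by metis
  qed
  have "good z M'" unfolding good_def
  proof (intro conjI allI impI)
    show "(z, norm z) \<in> M'" unfolding M'_def using zM by (intro CollectI exI[of _ z] exI[of _ "norm z"] exI[of _ 0]) simp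
  next
    fix x a b assume "(x,a)\<in>M'" "(x,b)\<in>M'"
    then obtain s1 a1 t1 s2 a2 t2 where "(s1,a1)\<in>M" "(s2,a2)\<in>M" "x = s1 + t1 *\<^sub>R x0" "a = a1 + t1*c"
      "x = s2 + t2 *\<^sub>R x0" "b = a2 + t2*c" unfolding M'_def by blast
    then show "a = b" using inj[of s1 a1 s2 a2 t1 t2] fnc by auto
  next
    fix x a y b assume "(x,a)\<in>M'" "(y,b)\<in>M'"
    then obtain s1 a1 t1 s2 a2 t2 where h: "(s1,a1)\<in>M" "(s2,a2)\<in>M" "x = s1 + t1 *\<^sub>R x0" "a = a1 + t1*c"
      "y = s2 + t2 *\<^sub>R x0" "b = a2 + t2*c" unfolding M'_def by blast
    show "(x+y,a+b)\<in>M'" unfolding M'_def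
      by (intro CollectI exI[of _ "s1+s2"] exI[of _ "a1+a2"] exI[of _ "t1+t2"])
         (simp add: h add algebra_simps)
  next
    fix x a r assume "(x,a)\<in>M'"
    then obtain s1 a1 t1 where h: "(s1,a1)\<in>M" "x = s1 + t1 *\<^sub>R x0" "a = a1 + t1*c"
      unfolding M'_def by blast
    have e: "(r *\<^sub>R x, r*a) = (r *\<^sub>R s1 + (r*t1) *\<^sub>R x0, r*a1 + (r*t1)*c)"
      by (simp add: h algebra_simps)
    show "(r *\<^sub>R x, r*a)\<in>M'" unfolding M'_def e using sc[OF h(1), of r] by blast
  next
    fix x a assume "(x,a)\<in>M'"
    then obtain s a1 t where h: "(s,a1)\<in>M" "x = s + t *\<^sub>R x0" "a = a1 + t*c"
      unfolding M'_def by blast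
    show "a \<le> norm x"
    proof (cases "t = 0")
      case True then show ?thesis using h dom by simp
    next
      case False
      have hm: "((1/t) *\<^sub>R s, (1/t)*a1) \<in> M" by (rule sc[OF h(1)])
      show ?thesis
      proof (cases "t > 0")
        case True
        have "c \<le> norm ((1/t) *\<^sub>R s + x0) - (1/t)*a1" by (rule c_up[OF hm])
        then have "t * c \<le> t * (norm ((1/t) *\<^sub>R s + x0) - (1/t)*a1)" using True by (simp add: mult_left_mono)
        also have "\<dots> = norm (t *\<^sub>R ((1/t) *\<^sub>R s + x0)) - a1" using True by (simp add: right_diff_distrib)
        also have "t *\<^sub>R ((1/t) *\<^sub>R s + x0) = s + t *\<^sub>R x0" using True by (simp add: scaleR_add_right)
        finally show ?thesis using h by simp
      next
        case False
        then have tn: "t < 0" using \<open>t \<noteq> 0\<close> by simp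
        have hm2: "((-1/t) *\<^sub>R s, (-1/t)*a1) \<in> M" by (rule sc[OF h(1)])
        have "(-1/t)*a1 - norm ((-1/t) *\<^sub>R s - x0) \<le> c" by (rule c_low[OF hm2])
        then have "(-t) * ((-1/t)*a1 - norm ((-1/t) *\<^sub>R s - x0)) \<le> (-t) * c" using tn by (simp add: mult_left_mono)
        moreover have "(-t) * ((-1/t)*a1 - norm ((-1/t) *\<^sub>R s - x0)) = a1 - norm ((-t) *\<^sub>R ((-1/t) *\<^sub>R s - x0))"
          using tn by (simp add: right_diff_distrib)
        moreover have "(-t) *\<^sub>R ((-1/t) *\<^sub>R s - x0) = s + t *\<^sub>R x0" using tn by (simp add: algebra_simps)
        ultimately have "a1 - norm (s + t *\<^sub>R x0) \<le> (-t) * c" by metis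
        then show ?thesis using h by simp
      qed
    qed
  qed
  moreover have "M \<subseteq> M'" unfolding M'_def by (force intro: exI[of _ 0])
  moreover have "(x0, c) \<in> M'" unfolding M'_def using zero by (intro CollectI exI[of _ 0] exI[of _ 0] exI[of _ 1]) simp
  ultimately show ?thesis using x0 by blast
qed

lemma exists_functional:
  fixes z :: "'a::real_normed_vector"
  assumes "z \<noteq> 0"
  shows "\<exists>f. (\<forall>x y. f (x + y) = f x + f y) \<and> (\<forall>r x. f (r *\<^sub>R x) = r * f x) \<and> (\<forall>x. \<bar>f x\<bar> \<le> norm x) \<and> f z \<noteq> 0"
proof -
  have "\<exists>M\<in>{G. good z G}. \<forall>X\<in>{G. good z G}. M \<subseteq> X \<longrightarrow> X = M"
    by (rule subset_Zorn_nonempty) (use good_G0[OF assms] good_chain in blast)+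
  then obtain M where g: "good z M" and mx: "\<And>X. good z X \<Longrightarrow> M \<subseteq> X \<Longrightarrow> X = M" by blast
  have tot: "\<exists>a. (x,a)\<in>M" for x using good_extend[OF g, of x] mx by blast
  have fnc: "\<And>x a b. (x,a)\<in>M \<Longrightarrow> (x,b)\<in>M \<Longrightarrow> a=b"
   and add: "\<And>x a y b. (x,a)\<in>M \<Longrightarrow> (y,b)\<in>M \<Longrightarrow> (x+y,a+b)\<in>M"
   and sc: "\<And>x a r. (x,a)\<in>M \<Longrightarrow> (r *\<^sub>R x, r*a)\<in>M"
   and dom: "\<And>x a. (x,a)\<in>M \<Longrightarrow> a \<le> norm x"
   and zM: "(z, norm z) \<in> M"
    using g unfolding good_def by blast+
  define f where "f x = (THE a. (x,a)\<in>M)" for x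
  have fM: "(x, f x) \<in> M" for x unfolding f_def using tot[of x] fnc by (metis theI)
  have fe: "f x = a" if "(x,a)\<in>M" for x a using fnc[OF fM that] .
  show ?thesis
  proof (intro exI[of _ f] conjI allI)
    show "f (x + y) = f x + f y" for x y using fe[OF add[OF fM fM]] .
    show "f (r *\<^sub>R x) = r * f x" for r x using fe[OF sc[OF fM]] .
    show "\<bar>f x\<bar> \<le> norm x" for x
      using dom[OF fM, of x] dom[OF sc[OF fM[of x], of "-1"]] by simp
    show "f z \<noteq> 0" using fe[OF zM] assms by simp
  qed
qed

lemma scaleC_minus1: "complex_of_real (-1) *\<^sub>C (x::'a::complex_banach_algebra_1) = - x"
  using scaleR_scaleC[of "-1" x] by simp

lemma scaleC_neg1: "(-1::complex) *\<^sub>C (x::'a::complex_banach_algebra_1) = - x"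
  using scaleC_minus1[of x] by simp

lemma scaleC_decomp: "(c::complex) *\<^sub>C (x::'a::complex_banach_algebra_1) = Re c *\<^sub>R x + Im c *\<^sub>R (\<i> *\<^sub>C x)"
proof -
  have "c = complex_of_real (Re c) + complex_of_real (Im c) * \<i>" by (simp add: complex_eq_iff)
  then have "c *\<^sub>C x = complex_of_real (Re c) *\<^sub>C x + (complex_of_real (Im c) * \<i>) *\<^sub>C x"
    by (metis scaleC_add_left)
  then show ?thesis by (simp add: scaleR_scaleC scaleC_scaleC)
qed

lemma separating_functional:
  fixes z :: "'a::complex_banach_algebra_1"
  assumes "z \<noteq> 0"
  shows "\<exists>\<phi>\<in>cdual. \<phi> z \<noteq> 0"
proof -
  obtain f where fa: "\<And>x y. f (x + y) = f x + f y" and fs: "\<And>r x. f (r *\<^sub>R x) = r * f x"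
    and fb: "\<And>x. \<bar>f x\<bar> \<le> norm x" and fz: "f z \<noteq> 0"
    using exists_functional[OF assms] by blast
  have fc: "f (c *\<^sub>C x) = Re c * f x + Im c * f (\<i> *\<^sub>C x)" for c x
    unfolding scaleC_decomp[of c x] by (simp add: fa fs)
  have fii: "f (\<i> *\<^sub>C (\<i> *\<^sub>C x)) = - f x" for x
  proof -
    have "\<i> *\<^sub>C (\<i> *\<^sub>C x) = complex_of_real (-1) *\<^sub>C x" by (simp add: scaleC_scaleC)
    then show ?thesis using fs[of "-1" x] by (simp add: scaleC_neg1)
  qed
  define \<phi> where "\<phi> x = Complex (f x) (- f (\<i> *\<^sub>C x))" for x
  have "\<phi> \<in> cdual" unfolding cdual_def
  proof (intro CollectI conjI allI)
    show "\<phi> (x + y) = \<phi> x + \<phi> y" for x y unfolding \<phi>_def by (simp add: scaleC_add_right fa complex_eq_iff)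
    show "\<phi> (c *\<^sub>C x) = c * \<phi> x" for c x
    proof -
      have "\<i> *\<^sub>C (c *\<^sub>C x) = c *\<^sub>C (\<i> *\<^sub>C x)" by (simp add: scaleC_scaleC mult.commute)
      then have h2: "f (\<i> *\<^sub>C (c *\<^sub>C x)) = Re c * f (\<i> *\<^sub>C x) - Im c * f x"
        using fc[of c "\<i> *\<^sub>C x"] fii[of x] by simp
      have h1: "f (c *\<^sub>C x) = Re c * f x + Im c * f (\<i> *\<^sub>C x)" by (rule fc)
      show ?thesis unfolding \<phi>_def h1 h2 by (simp add: complex_eq_iff algebra_simps)
    qed
    show "\<exists>K. \<forall>x. cmod (\<phi> x) \<le> K * norm x"
    proof (intro exI allI)
      fix x
      have "cmod (\<phi> x) \<le> \<bar>f x\<bar> + \<bar>f (\<i> *\<^sub>C x)\<bar>" unfolding \<phi>_def using cmod_le[of "Complex (f x) (- f (\<i> *\<^sub>C x))"] by simp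
      also have "\<dots> \<le> norm x + norm (\<i> *\<^sub>C x)" using fb by (intro add_mono)
      also have "\<dots> = 2 * norm x" by (simp add: norm_scaleC)
      finally show "cmod (\<phi> x) \<le> 2 * norm x" .
    qed
  qed
  moreover have "\<phi> z \<noteq> 0" unfolding \<phi>_def using fz by (simp add: complex_eq_iff)
  ultimately show ?thesis by blast
qed

theorem lemma2p3:
  fixes \<Delta> :: "'a::unital_cstar_algebra \<Rightarrow> 'a" and p a :: 'a and \<mu> :: complex
  assumes "weak_2_local_derivation \<Delta>"
    and "is_projection p"
  shows "\<Delta> (a + \<mu> *\<^sub>C p) = \<Delta> (a - \<mu> *\<^sub>C (1 - p))"
proof (rule ccontr)
  define x where "x = a + \<mu> *\<^sub>C p"
  define y where "y = a - \<mu> *\<^sub>C (1 - p)"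
  assume "\<Delta> (a + \<mu> *\<^sub>C p) \<noteq> \<Delta> (a - \<mu> *\<^sub>C (1 - p))"
  then have "\<Delta> x - \<Delta> y \<noteq> 0" unfolding x_def y_def by simp
  then obtain \<phi> where \<phi>: "\<phi> \<in> cdual" and nz: "\<phi> (\<Delta> x - \<Delta> y) \<noteq> 0"
    using separating_functional by blast
  obtain D where D: "derivation D" and e1: "\<phi> (\<Delta> x) = \<phi> (D x)" and e2: "\<phi> (\<Delta> y) = \<phi> (D y)"
    using assms(1) \<phi> unfolding weak_2_local_derivation_def by blast
  have Dadd: "\<And>u v. D (u + v) = D u + D v" and Dsc: "\<And>c u. D (c *\<^sub>C u) = c *\<^sub>C D u"
    and Dl: "\<And>u v. D (u * v) = D u * v + u * D v"
    using D unfolding derivation_def clinear_map_def by blast+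
  have D1: "D 1 = 0" using Dl[of 1 1] by simp
  have sc0: "\<mu> *\<^sub>C (0::'a) = 0" using scaleC_add_right[of \<mu> 0 0] by simp
  have "\<mu> *\<^sub>C (1::'a) = \<mu> *\<^sub>C (1 - p) + \<mu> *\<^sub>C p" using scaleC_add_right[of \<mu> "1 - p" p] by simp
  then have xy: "x = y + \<mu> *\<^sub>C 1" unfolding x_def y_def by (simp add: algebra_simps)
  have "D x = D y" unfolding xy Dadd Dsc D1 sc0 by simp
  have pa: "\<phi> (u + v) = \<phi> u + \<phi> v" for u v using \<phi> unfolding cdual_def by blast
  have "\<phi> (\<Delta> x) = \<phi> (\<Delta> x - \<Delta> y) + \<phi> (\<Delta> y)" using pa[of "\<Delta> x - \<Delta> y" "\<Delta> y"] by simp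
  then show False using nz e1 e2 \<open>D x = D y\<close> by simp
qed

end
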